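(* Let $G$ be a block graph with at least one edge and let $H$ be a maximal threshold subgraph of $G$. Then there exist a block $Q$ of $G$ and a vertex $u\in V(Q)$ such that $E(H)=E(Q_u(G))$.
   Context: All graphs are finite and simple. A block is a maximal connected subgraph with no cut-vertex of its own; a block graph is a graph whose blocks are all complete. For a clique $Q$ in $G$ and $u\in V(Q)$, $Q_u(G)=\big(V(Q)\cup N_G(u),\ E(Q)\cup\delta_G(u)\big)$, where $N_G(u)$ is the neighbourhood and $\delta_G(u)$ the incident edge set of $u$. A threshold graph is a graph obtainable from a single vertex by repeatedly adding an isolated or a universal vertex; equivalently, a graph with no induced $P_4$, $C_4$ or $2K_2$. A threshold subgraph $H$ of $G$ is maximal if no threshold subgraph $H'$ of $G$ satisfies $E(H)\subsetneq E(H')$. *)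

theory Defs
  imports Main
begin

definition graph :: "'a set \<Rightarrow> 'a set set \<Rightarrow> bool" where
  "graph V E \<longleftrightarrow> finite V \<and> (\<forall>e\<in>E. \<exists>x y. e = {x, y} \<and> x \<noteq> y \<and> x \<in> V \<and> y \<in> V)"

definition subgraph :: "'a set \<Rightarrow> 'a set set \<Rightarrow> 'a set \<Rightarrow> 'a set set \<Rightarrow> bool" where
  "subgraph V' E' V E \<longleftrightarrow> V' \<subseteq> V \<and> E' \<subseteq> E \<and> graph V' E'"

definition reachable :: "'a set \<Rightarrow> 'a set set \<Rightarrow> 'a \<Rightarrow> 'a \<Rightarrow> bool" where
  "reachable V E x y \<longleftrightarrow> x \<in> V \<and> y \<in> V \<and> (\<lambda>a b. {a, b} \<in> E \<and> a \<in> V \<and> b \<in> V)\<^sup>*\<^sup>* x y"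

definition connected_graph :: "'a set \<Rightarrow> 'a set set \<Rightarrow> bool" where
  "connected_graph V E \<longleftrightarrow> V \<noteq> {} \<and> (\<forall>x\<in>V. \<forall>y\<in>V. reachable V E x y)"

definition del_vertex_edges :: "'a set set \<Rightarrow> 'a \<Rightarrow> 'a set set" where
  "del_vertex_edges E v = {e \<in> E. v \<notin> e}"

text \<open>v is a cut-vertex: deleting it increases the number of components,
  i.e. it separates two vertices lying in the same component.\<close>
definition cut_vertex :: "'a set \<Rightarrow> 'a set set \<Rightarrow> 'a \<Rightarrow> bool" where
  "cut_vertex V E v \<longleftrightarrow> v \<in> V \<and> (\<exists>x\<in>V - {v}. \<exists>y\<in>V - {v}.
      reachable V E x y \<and> \<not> reachable (V - {v}) (del_vertex_edges E v) x y)"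

definition biconn_piece :: "'a set \<Rightarrow> 'a set set \<Rightarrow> bool" where
  "biconn_piece V E \<longleftrightarrow> connected_graph V E \<and> (\<nexists>v. cut_vertex V E v)"

definition is_block :: "'a set \<Rightarrow> 'a set set \<Rightarrow> 'a set \<Rightarrow> 'a set set \<Rightarrow> bool" where
  "is_block V E B EB \<longleftrightarrow> subgraph B EB V E \<and> biconn_piece B EB \<and>
     (\<forall>B' EB'. subgraph B' EB' V E \<and> biconn_piece B' EB' \<and> B \<subseteq> B' \<and> EB \<subseteq> EB'
        \<longrightarrow> B' = B \<and> EB' = EB)"

definition complete_graph :: "'a set \<Rightarrow> 'a set set \<Rightarrow> bool" where
  "complete_graph V E \<longleftrightarrow> (\<forall>x\<in>V. \<forall>y\<in>V. x \<noteq> y \<longrightarrow> {x, y} \<in> E)"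

definition block_graph :: "'a set \<Rightarrow> 'a set set \<Rightarrow> bool" where
  "block_graph V E \<longleftrightarrow> graph V E \<and> (\<forall>B EB. is_block V E B EB \<longrightarrow> complete_graph B EB)"

inductive threshold :: "'a set \<Rightarrow> 'a set set \<Rightarrow> bool" where
  single: "threshold {v} {}"
| add_isolated: "threshold V E \<Longrightarrow> v \<notin> V \<Longrightarrow> threshold (insert v V) E"
| add_universal: "threshold V E \<Longrightarrow> v \<notin> V \<Longrightarrow>
     threshold (insert v V) (E \<union> {{v, w} | w. w \<in> V})"

definition threshold_subgraph :: "'a set \<Rightarrow> 'a set set \<Rightarrow> 'a set \<Rightarrow> 'a set set \<Rightarrow> bool" where
  "threshold_subgraph V E VH EH \<longleftrightarrow> subgraph VH EH V E \<and> threshold VH EH"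

definition max_threshold_subgraph :: "'a set \<Rightarrow> 'a set set \<Rightarrow> 'a set \<Rightarrow> 'a set set \<Rightarrow> bool" where
  "max_threshold_subgraph V E VH EH \<longleftrightarrow> threshold_subgraph V E VH EH \<and>
     (\<nexists>VH' EH'. threshold_subgraph V E VH' EH' \<and> EH \<subset> EH')"

definition incident_edges :: "'a set set \<Rightarrow> 'a \<Rightarrow> 'a set set" where
  "incident_edges E u = {e \<in> E. u \<in> e}"

definition neighbours :: "'a set set \<Rightarrow> 'a \<Rightarrow> 'a set" where
  "neighbours E u = {w. {u, w} \<in> E}"

definition Qu :: "'a set \<Rightarrow> 'a set set \<Rightarrow> 'a set set \<Rightarrow> 'a \<Rightarrow> 'a set \<times> 'a set set" where
  "Qu Q EQ E u = (Q \<union> neighbours E u, EQ \<union> incident_edges E u)"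

end

theory Submission
  imports Defs
begin

lemma thr_edges:
  assumes "threshold V E"
  shows "\<forall>e\<in>E. \<exists>x y. e = {x,y} \<and> x \<noteq> y \<and> x \<in> V \<and> y \<in> V"
  using assms by induction blast+

lemma thr_center:
  assumes "threshold V E" "E \<noteq> {}"
  shows "\<exists>u\<in>V. \<forall>e\<in>E. \<forall>x\<in>e. x = u \<or> {u,x} \<in> E"
  using assms
proof induction
  case (single v) then show ?case by simp
next
  case (add_isolated V E v) then show ?case by blast
next
  case (add_universal V E v)
  have "\<forall>e\<in>E \<union> {{v, w} |w. w \<in> V}. \<forall>x\<in>e. x = v \<or> {v,x} \<in> E \<union> {{v, w} |w. w \<in> V}"
  proof (intro ballI)
    fix e x assume e: "e \<in> E \<union> {{v, w} |w. w \<in> V}" and x: "x \<in> e"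
    have "x \<in> insert v V"
    proof (cases "e \<in> E")
      case True then show ?thesis using thr_edges[OF add_universal.hyps(1)] x by fastforce
    next
      case False then show ?thesis using e x by auto
    qed
    then show "x = v \<or> {v,x} \<in> E \<union> {{v, w} |w. w \<in> V}" by auto
  qed
  then show ?case by blast
qed

lemma thr_no2K2:
  "threshold V E \<Longrightarrow> {a,b} \<in> E \<Longrightarrow> {c,d} \<in> E \<Longrightarrow> a \<noteq> c \<Longrightarrow> a \<noteq> d \<Longrightarrow> b \<noteq> c \<Longrightarrow> b \<noteq> d \<Longrightarrow>
     {a,c} \<in> E \<or> {a,d} \<in> E \<or> {b,c} \<in> E \<or> {b,d} \<in> E"
proof (induction arbitrary: a b c d rule: threshold.induct)
  case (single v) then show ?case by simp
next
  case (add_isolated V E v) then show ?case by blast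
next
  case (add_universal V E v)
  let ?U = "{{v, w} |w. w \<in> V}"
  have mem: "p \<in> V" if "{p,q} \<in> E \<union> ?U" "p \<noteq> v" for p q
  proof (cases "{p,q} \<in> E")
    case True then show ?thesis using thr_edges[OF add_universal.hyps(1)] by (metis insertCI insert_iff doubleton_eq_iff)
  next
    case False then show ?thesis using that by (auto simp: doubleton_eq_iff)
  qed
  show ?case
  proof (cases "{a,b} \<in> E \<and> {c,d} \<in> E")
    case True
    have "{a,c} \<in> E \<or> {a,d} \<in> E \<or> {b,c} \<in> E \<or> {b,d} \<in> E"
      using add_universal.IH[of a b c d] True add_universal.prems(3-6) by blast
    then show ?thesis by blast
  next
    case False
    then have "v \<in> {a,b} \<or> v \<in> {c,d}" using add_universal.prems(1,2) by (auto simp: doubleton_eq_iff)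
    then show ?thesis
    proof (elim disjE)
      assume "v \<in> {a,b}"
      then show ?thesis
      proof
        assume "v = a"
        then have "c \<in> V" using mem[of c d] add_universal.prems by auto
        then show ?thesis using \<open>v = a\<close> by auto
      next
        assume "v \<in> {b}"
        then have "c \<in> V" using mem[of c d] add_universal.prems by auto
        then show ?thesis using \<open>v \<in> {b}\<close> by auto
      qed
    next
      assume "v \<in> {c,d}"
      then show ?thesis
      proof
        assume "v = c"
        then have "a \<in> V" using mem[of a b] add_universal.prems by auto
        then show ?thesis using \<open>v = c\<close> by (auto simp: insert_commute)
      next
        assume "v \<in> {d}"
        then have "a \<in> V" using mem[of a b] add_universal.prems by auto
        then show ?thesis using \<open>v \<in> {d}\<close> by (auto simp: insert_commute)
      qed
    qed
  qed
qed

definition clq :: "'a set \<Rightarrow> 'a set set" where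
  "clq K = {{x,y}|x y. x \<in> K \<and> y \<in> K \<and> x \<noteq> y}"

lemma thr_clique: "finite K \<Longrightarrow> K \<noteq> {} \<Longrightarrow> threshold K (clq K)"
proof (induction K rule: finite_ne_induct)
  case (singleton x)
  have "clq {x} = {}" by (auto simp: clq_def)
  then show ?case using threshold.single by metis
next
  case (insert x F)
  have "clq (insert x F) = clq F \<union> {{x, w} |w. w \<in> F}"
  proof
    show "clq (insert x F) \<subseteq> clq F \<union> {{x, w} |w. w \<in> F}"
    proof
      fix e assume "e \<in> clq (insert x F)"
      then obtain p q where e: "e = {p,q}" "p \<in> insert x F" "q \<in> insert x F" "p \<noteq> q"
        unfolding clq_def by blast
      show "e \<in> clq F \<union> {{x, w} |w. w \<in> F}"
      proof (cases "p = x")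
        case True then show ?thesis using e by auto
      next
        case False
        show ?thesis
        proof (cases "q = x")
          case True then show ?thesis using e by (auto simp: insert_commute)
        next
          case False
          then show ?thesis using e \<open>p \<noteq> x\<close> unfolding clq_def by blast
        qed
      qed
    qed
    show "clq F \<union> {{x, w} |w. w \<in> F} \<subseteq> clq (insert x F)"
      using insert.hyps unfolding clq_def by blast
  qed
  then show ?case using threshold.add_universal[OF insert.IH insert.hyps(3)] by simp
qed

lemma thr_iso: "finite F \<Longrightarrow> threshold V E \<Longrightarrow> F \<inter> V = {} \<Longrightarrow> threshold (F \<union> V) E"
proof (induction F rule: finite_induct)
  case empty then show ?case by simp
next
  case (insert x F)
  then have "threshold (F \<union> V) E" by auto
  moreover have "x \<notin> F \<union> V" using insert by auto
  ultimately show ?case using threshold.add_isolated by fastforce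
qed

lemma thr_ext: assumes "finite W" "K \<subseteq> W" "W \<noteq> {}" shows "threshold W (clq K)"
proof (cases "K = {}")
  case True
  then obtain t where t: "t \<in> W" using assms by auto
  have "clq K = {}" using True by (auto simp: clq_def)
  moreover have "threshold ((W - {t}) \<union> {t}) {}"
    by (rule thr_iso) (use assms in \<open>auto intro: threshold.single\<close>)
  moreover have "(W - {t}) \<union> {t} = W" using t by auto
  ultimately show ?thesis by simp
next
  case False
  have "threshold ((W - K) \<union> K) (clq K)"
    by (rule thr_iso) (use assms False finite_subset in \<open>auto intro: thr_clique\<close>)
  moreover have "(W - K) \<union> K = W" using assms by auto
  ultimately show ?thesis by simp
qed


lemma graph_mem: assumes "graph V E" "e \<in> E" "x \<in> e" shows "x \<in> V"
proof -
  obtain a b where "e = {a,b}" "a \<in> V" "b \<in> V" using assms(1,2) unfolding graph_def by blast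
  then show ?thesis using assms(3) by auto
qed

lemma graph_no_loop: assumes "graph V E" shows "{u} \<notin> E"
proof
  assume "{u} \<in> E"
  then obtain a b where ab: "{u} = {a,b}" "a \<noteq> b" using assms unfolding graph_def by blast
  have "a \<in> {u}" using ab(1) by (metis insertI1)
  moreover have "b \<in> {u}" using ab(1) by (metis insertI1 insert_commute)
  ultimately show False using ab(2) by simp
qed

lemma Qu_thr:
  assumes g: "graph V E" and QV: "Q \<subseteq> V" and uQ: "u \<in> Q" and c: "complete_graph Q EQ"
    and gQ: "graph Q EQ" and EQE: "EQ \<subseteq> E"
  shows "threshold_subgraph V E (Q \<union> neighbours E u) (EQ \<union> incident_edges E u)"
proof -
  have nl: "u \<notin> neighbours E u" using graph_no_loop[OF g, of u] by (simp add: neighbours_def)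
  have NV: "neighbours E u \<subseteq> V"
  proof
    fix x assume "x \<in> neighbours E u"
    then have "{u,x} \<in> E" by (simp add: neighbours_def)
    then show "x \<in> V" using graph_mem[OF g, of "{u,x}" x] by blast
  qed
  have EQc: "EQ = clq Q"
  proof
    show "EQ \<subseteq> clq Q"
    proof
      fix e assume "e \<in> EQ"
      then obtain x y where "e = {x,y}" "x \<noteq> y" "x \<in> Q" "y \<in> Q" using gQ unfolding graph_def by blast
      then show "e \<in> clq Q" unfolding clq_def by blast
    qed
    show "clq Q \<subseteq> EQ"
    proof
      fix e assume "e \<in> clq Q"
      then obtain x y where "e = {x,y}" "x \<noteq> y" "x \<in> Q" "y \<in> Q" unfolding clq_def by blast
      then show "e \<in> EQ" using c unfolding complete_graph_def by blast
    qed
  qed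
  have inc: "incident_edges E u = {{u,w}|w. w \<in> neighbours E u}"
  proof
    show "incident_edges E u \<subseteq> {{u,w}|w. w \<in> neighbours E u}"
    proof
      fix e assume "e \<in> incident_edges E u"
      then have e: "e \<in> E" "u \<in> e" by (auto simp: incident_edges_def)
      then obtain x y where xy: "e = {x,y}" using g unfolding graph_def by blast
      show "e \<in> {{u,w}|w. w \<in> neighbours E u}"
      proof (cases "u = x")
        case True
        then have "y \<in> neighbours E u" using e xy by (simp add: neighbours_def)
        then show ?thesis using True xy by blast
      next
        case False
        then have "u = y" using e xy by blast
        then have "e = {u,x}" using xy by (simp add: insert_commute)
        moreover have "x \<in> neighbours E u" using e calculation by (simp add: neighbours_def)
        ultimately show ?thesis by blast
      qed
    qed
    show "{{u,w}|w. w \<in> neighbours E u} \<subseteq> incident_edges E u"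
      unfolding neighbours_def incident_edges_def by blast
  qed
  define K where "K = Q - {u}"
  define T where "T = K \<union> neighbours E u"
  have clqQ: "clq Q = clq K \<union> {{u,w}|w. w \<in> K}"
  proof
    show "clq Q \<subseteq> clq K \<union> {{u,w}|w. w \<in> K}"
    proof
      fix e assume "e \<in> clq Q"
      then obtain p q where e: "e = {p,q}" "p \<in> Q" "q \<in> Q" "p \<noteq> q"
        unfolding clq_def by blast
      show "e \<in> clq K \<union> {{u,w}|w. w \<in> K}"
      proof (cases "p = u")
        case True then show ?thesis using e K_def by auto
      next
        case False
        show ?thesis
        proof (cases "q = u")
          case True then show ?thesis using e K_def by (auto simp: insert_commute)
        next
          case False
          then show ?thesis using e \<open>p \<noteq> u\<close> K_def unfolding clq_def by blast
        qed
      qed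
    qed
    show "clq K \<union> {{u,w}|w. w \<in> K} \<subseteq> clq Q"
      using uQ unfolding clq_def K_def by blast
  qed
  have finV: "finite V" using g by (simp add: graph_def)
  have VT: "insert u T = Q \<union> neighbours E u" using uQ unfolding T_def K_def by auto
  have ET: "clq K \<union> {{u,w}|w. w \<in> T} = EQ \<union> incident_edges E u"
  proof -
    have "{{u,w}|w. w \<in> T} = {{u,w}|w. w \<in> K} \<union> {{u,w}|w. w \<in> neighbours E u}"
      unfolding T_def by auto
    then show ?thesis unfolding EQc clqQ inc by (simp add: Un_assoc)
  qed
  have thr: "threshold (Q \<union> neighbours E u) (EQ \<union> incident_edges E u)"
  proof (cases "T = {}")
    case True
    then have "Q = {u}" "neighbours E u = {}" using uQ unfolding T_def K_def by auto
    moreover have "EQ = {}" using EQc \<open>Q = {u}\<close> by (auto simp: clq_def)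
    ultimately show ?thesis using inc by (auto intro: threshold.single)
  next
    case False
    have "finite T" using finite_subset[OF _ finV] QV NV unfolding T_def K_def by blast
    then have "threshold T (clq K)" using False by (intro thr_ext) (auto simp: T_def)
    moreover have "u \<notin> T" using nl unfolding T_def K_def by auto
    ultimately have "threshold (insert u T) (clq K \<union> {{u,w}|w. w \<in> T})"
      by (rule threshold.add_universal)
    then show ?thesis using VT ET by simp
  qed
  have sub: "subgraph (Q \<union> neighbours E u) (EQ \<union> incident_edges E u) V E"
    unfolding subgraph_def
  proof (intro conjI)
    show "Q \<union> neighbours E u \<subseteq> V" using QV NV by auto
    show "EQ \<union> incident_edges E u \<subseteq> E" using EQE by (auto simp: incident_edges_def)
    show "graph (Q \<union> neighbours E u) (EQ \<union> incident_edges E u)"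
      unfolding graph_def
    proof (intro conjI ballI)
      show "finite (Q \<union> neighbours E u)" using finite_subset[OF _ finV] QV NV by blast
      fix e assume "e \<in> EQ \<union> incident_edges E u"
      then show "\<exists>x y. e = {x, y} \<and> x \<noteq> y \<and> x \<in> Q \<union> neighbours E u \<and> y \<in> Q \<union> neighbours E u"
      proof
        assume "e \<in> EQ" then show ?thesis using gQ unfolding graph_def by blast
      next
        assume "e \<in> incident_edges E u"
        then obtain w where "e = {u,w}" "w \<in> neighbours E u" using inc by auto
        then show ?thesis using nl uQ by blast
      qed
    qed
  qed
  show ?thesis using sub thr by (simp add: threshold_subgraph_def)
qed


lemma edge_thr:
  assumes g: "graph V E" and e: "e \<in> E"
  shows "\<exists>VH'. threshold_subgraph V E VH' {e}"
proof -
  obtain x y where xy: "e = {x,y}" "x \<noteq> y" "x \<in> V" "y \<in> V" using g e unfolding graph_def by blast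
  have "threshold (insert y {x}) ({} \<union> {{y, w} |w. w \<in> {x}})"
    by (rule threshold.add_universal) (use xy in \<open>auto intro: threshold.single\<close>)
  moreover have "{} \<union> {{y, w} |w. w \<in> {x}} = {e}" using xy by (auto simp: insert_commute)
  ultimately have "threshold {x,y} {e}" by (simp add: insert_commute)
  moreover have "subgraph {x,y} {e} V E" unfolding subgraph_def graph_def using xy e by auto
  ultimately show ?thesis unfolding threshold_subgraph_def by blast
qed

theorem lemma14:
  fixes V VH :: "'a set" and E EH :: "'a set set"
  assumes "block_graph V E"
    and "E \<noteq> {}"
    and "max_threshold_subgraph V E VH EH"
  shows "\<exists>Q EQ u. is_block V E Q EQ \<and> u \<in> Q \<and>
           EH = snd (Qu Q EQ E u)"
proof -
  have g: "graph V E" and bc: "\<And>B EB. is_block V E B EB \<Longrightarrow> complete_graph B EB"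
    using assms(1) unfolding block_graph_def by auto
  have subH: "subgraph VH EH V E" and thrH: "threshold VH EH"
    and maxH: "\<And>VH' EH'. threshold_subgraph V E VH' EH' \<Longrightarrow> \<not> EH \<subset> EH'"
    using assms(3) unfolding max_threshold_subgraph_def threshold_subgraph_def by auto
  have gH: "graph VH EH" and EHE: "EH \<subseteq> E" and VHV: "VH \<subseteq> V" using subH unfolding subgraph_def by auto
  have finV: "finite V" using g unfolding graph_def by auto
  have EH0: "EH \<noteq> {}"
  proof
    assume "EH = {}"
    obtain e where "e \<in> E" using assms(2) by auto
    then obtain VH' where "threshold_subgraph V E VH' {e}" using edge_thr[OF g] by blast
    then show False using maxH \<open>EH = {}\<close> by blast
  qed
  obtain u where uVH: "u \<in> VH" and cen: "\<And>e x. e \<in> EH \<Longrightarrow> x \<in> e \<Longrightarrow> x = u \<or> {u,x} \<in> EH"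
    using thr_center[OF thrH EH0] by blast
  define N where "N = {x. x \<noteq> u \<and> (\<exists>e\<in>EH. x \<in> e \<and> u \<notin> e)}"
  define S where "S = insert u N"
  define ES where "ES = {e\<in>E. e \<subseteq> S}"
  have uN: "{u,x} \<in> EH" if xN: "x \<in> N" for x
  proof -
    obtain e where "e \<in> EH" "x \<in> e" "x \<noteq> u" using xN unfolding N_def by blast
    then show ?thesis using cen by blast
  qed
  have uV: "u \<in> V" using uVH VHV by auto
  have NV: "N \<subseteq> V"
  proof
    fix x assume "x \<in> N"
    then have "{u,x} \<in> E" using uN EHE by auto
    then show "x \<in> V" using graph_mem[OF g, of "{u,x}" x] by blast
  qed
  have SV: "S \<subseteq> V" using NV uV S_def by auto
  have finS: "finite S" using finite_subset[OF SV finV] .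
  have subS: "subgraph S ES V E"
    unfolding subgraph_def
  proof (intro conjI)
    show "S \<subseteq> V" by (rule SV)
    show "ES \<subseteq> E" unfolding ES_def by auto
    show "graph S ES" unfolding graph_def
    proof (intro conjI ballI)
      show "finite S" by (rule finS)
      fix e assume "e \<in> ES"
      then have "e \<in> E" "e \<subseteq> S" unfolding ES_def by auto
      then obtain a b where "e = {a,b}" "a \<noteq> b" using g unfolding graph_def by blast
      then show "\<exists>x y. e = {x, y} \<and> x \<noteq> y \<and> x \<in> S \<and> y \<in> S" using \<open>e \<subseteq> S\<close> by blast
    qed
  qed
  have uedge: "{u,x} \<in> ES" "{x,u} \<in> ES" if "x \<in> N" for x
  proof -
    show "{u,x} \<in> ES" using uN[OF that] EHE that unfolding ES_def S_def by auto
    then show "{x,u} \<in> ES" by (simp add: insert_commute)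
  qed
  have conS: "connected_graph S ES"
    unfolding connected_graph_def
  proof (intro conjI ballI)
    show "S \<noteq> {}" unfolding S_def by auto
    fix x y assume x: "x \<in> S" and y: "y \<in> S"
    let ?R = "\<lambda>a b. {a, b} \<in> ES \<and> a \<in> S \<and> b \<in> S"
    have toU: "?R\<^sup>*\<^sup>* z u" "?R\<^sup>*\<^sup>* u z" if "z \<in> S" for z
    proof -
      show "?R\<^sup>*\<^sup>* z u"
      proof (cases "z = u")
        case False
        then have "z \<in> N" using that S_def by auto
        then have "?R z u" using uedge S_def by auto
        then show ?thesis by blast
      qed simp
      show "?R\<^sup>*\<^sup>* u z"
      proof (cases "z = u")
        case False
        then have "z \<in> N" using that S_def by auto
        then have "?R u z" using uedge S_def by auto
        then show ?thesis by blast
      qed simp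
    qed
    show "reachable S ES x y" unfolding reachable_def
      using x y toU[OF x] toU[OF y] by (meson rtranclp_trans)
  qed
  have nocut: "\<not> cut_vertex S ES v" for v
  proof
    assume "cut_vertex S ES v"
    then obtain x y where v: "v \<in> S" and x: "x \<in> S - {v}" and y: "y \<in> S - {v}"
      and nr: "\<not> reachable (S - {v}) (del_vertex_edges ES v) x y"
      unfolding cut_vertex_def by blast
    let ?R = "\<lambda>a b. {a, b} \<in> del_vertex_edges ES v \<and> a \<in> S - {v} \<and> b \<in> S - {v}"
    have "?R\<^sup>*\<^sup>* x y"
    proof (cases "v = u")
      case False
      have toU: "?R\<^sup>*\<^sup>* z u" "?R\<^sup>*\<^sup>* u z" if "z \<in> S - {v}" for z
      proof -
        show "?R\<^sup>*\<^sup>* z u"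
        proof (cases "z = u")
          case False
          then have "z \<in> N" using that S_def by auto
          then have "?R z u" using uedge \<open>v \<noteq> u\<close> that S_def unfolding del_vertex_edges_def by auto
          then show ?thesis by blast
        qed simp
        show "?R\<^sup>*\<^sup>* u z"
        proof (cases "z = u")
          case False
          then have "z \<in> N" using that S_def by auto
          then have "?R u z" using uedge \<open>v \<noteq> u\<close> that S_def unfolding del_vertex_edges_def by auto
          then show ?thesis by blast
        qed simp
      qed
      show ?thesis using toU[OF x] toU[OF y] by (meson rtranclp_trans)
    next
      case True
      have xN: "x \<in> N" and yN: "y \<in> N" using x y True S_def by auto
      let ?A = "\<lambda>a b. {a,b} \<in> EH \<and> a \<in> N \<and> b \<in> N"
      have AR: "?A a b \<longrightarrow> ?R a b" for a b
      proof
        assume A: "?A a b"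
        have "a \<noteq> u" "b \<noteq> u" using A unfolding N_def by auto
        then show "?R a b" using A EHE True unfolding del_vertex_edges_def ES_def S_def by auto
      qed
      have Asym: "?A b a" if "?A a b" for a b using that by (simp add: insert_commute)
      have partner: "\<exists>z. ?A w z" if wN: "w \<in> N" for w
      proof -
        obtain e where e: "e \<in> EH" "w \<in> e" "u \<notin> e" using wN unfolding N_def by blast
        obtain p q where pq: "e = {p,q}" "p \<noteq> q" using gH e(1) unfolding graph_def by blast
        obtain z where z: "e = {w,z}" "w \<noteq> z"
        proof (cases "w = p")
          case True then show ?thesis using that pq by blast
        next
          case False then have "w = q" using pq e(2) by blast
          then show ?thesis using that pq by (metis insert_commute)
        qed
        have "z \<in> N" using z e unfolding N_def by auto
        then show ?thesis using z e \<open>w \<in> N\<close> by blast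
      qed
      obtain x' where xx: "?A x x'" using partner[OF xN] by blast
      obtain y' where yy: "?A y y'" using partner[OF yN] by blast
      have ex: "\<exists>p\<in>{x,x'}. \<exists>q\<in>{y,y'}. p = q \<or> ?A p q"
      proof (cases "x \<noteq> y \<and> x \<noteq> y' \<and> x' \<noteq> y \<and> x' \<noteq> y'")
        case True
        have "{x,y} \<in> EH \<or> {x,y'} \<in> EH \<or> {x',y} \<in> EH \<or> {x',y'} \<in> EH"
          using thr_no2K2[OF thrH, of x x' y y'] xx yy True by blast
        then show ?thesis using xx yy by blast
      next
        case False then show ?thesis by blast
      qed
      then obtain p q where p: "p \<in> {x,x'}" and q: "q \<in> {y,y'}" and pq: "p = q \<or> ?A p q" by blast
      have "?A\<^sup>*\<^sup>* x p" using p xx by blast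
      moreover have "?A\<^sup>*\<^sup>* p q" using pq by blast
      moreover have "?A\<^sup>*\<^sup>* q y" using q Asym[OF yy] by blast
      ultimately have "?A\<^sup>*\<^sup>* x y" by (meson rtranclp_trans)
      then show ?thesis using mono_rtranclp[of ?A ?R, OF AR] by blast
    qed
    then have "reachable (S - {v}) (del_vertex_edges ES v) x y"
      unfolding reachable_def using x y by blast
    then show False using nr by blast
  qed
  have biS: "biconn_piece S ES" unfolding biconn_piece_def using conS nocut by blast
  define C where "C = {(B,EB). subgraph B EB V E \<and> biconn_piece B EB \<and> S \<subseteq> B \<and> ES \<subseteq> EB}"
  define f where "f = (\<lambda>(B::'a set, EB::'a set set). card B + card EB)"
  have finE: "finite E"
  proof -
    have "E \<subseteq> Pow V" using graph_mem[OF g] by blast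
    then show ?thesis using finV by (meson finite_Pow_iff finite_subset)
  qed
  have finC: "finite C"
  proof -
    have "C \<subseteq> Pow V \<times> Pow E" unfolding C_def subgraph_def by auto
    then show ?thesis using finV finE by (meson finite_Pow_iff finite_SigmaI finite_subset)
  qed
  have "(S,ES) \<in> C" unfolding C_def using subS biS by auto
  then have C0: "C \<noteq> {}" by auto
  have "Max (f ` C) \<in> f ` C" by (rule Max_in) (use finC C0 in auto)
  then obtain m where mC: "m \<in> C" and mmax: "f m = Max (f ` C)" by (metis imageE)
  obtain Q EQ where m: "m = (Q,EQ)" by (cases m)
  have fle: "f c \<le> f m" if "c \<in> C" for c using mmax finC that by simp
  have QC: "subgraph Q EQ V E" "biconn_piece Q EQ" "S \<subseteq> Q" "ES \<subseteq> EQ"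
    using mC unfolding m C_def by auto
  have blk: "is_block V E Q EQ"
    unfolding is_block_def
  proof (intro conjI allI impI)
    show "subgraph Q EQ V E" "biconn_piece Q EQ" using QC by auto
    fix B' EB' assume h: "subgraph B' EB' V E \<and> biconn_piece B' EB' \<and> Q \<subseteq> B' \<and> EQ \<subseteq> EB'"
    then have "(B',EB') \<in> C" using QC unfolding C_def by auto
    then have "f (B',EB') \<le> f (Q,EQ)" using fle m by simp
    then have le: "card B' + card EB' \<le> card Q + card EQ" unfolding f_def by simp
    have "B' \<subseteq> V" "EB' \<subseteq> E" using h unfolding subgraph_def by auto
    then have fB: "finite B'" "finite EB'" using finV finE finite_subset by auto
    have sb: "Q \<subseteq> B'" "EQ \<subseteq> EB'" using h by auto
    have c1: "card Q \<le> card B'" "card EQ \<le> card EB'"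
      using card_mono[OF fB(1) sb(1)] card_mono[OF fB(2) sb(2)] by auto
    have "card Q = card B'" "card EQ = card EB'" using le c1 by auto
    then show "B' = Q" "EB' = EQ" using card_subset_eq[OF fB(1) sb(1)] card_subset_eq[OF fB(2) sb(2)] by auto
  qed
  have cQ: "complete_graph Q EQ" using bc[OF blk] .
  have gQ: "graph Q EQ" and QV: "Q \<subseteq> V" and EQE: "EQ \<subseteq> E" using QC unfolding subgraph_def by auto
  have uQ: "u \<in> Q" using QC S_def by auto
  have tsub: "threshold_subgraph V E (Q \<union> neighbours E u) (EQ \<union> incident_edges E u)"
    using Qu_thr[OF g QV uQ cQ gQ EQE] .
  have EHsub: "EH \<subseteq> EQ \<union> incident_edges E u"
  proof
    fix e assume e: "e \<in> EH"
    obtain x y where xy: "e = {x,y}" "x \<noteq> y" using gH e unfolding graph_def by blast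
    show "e \<in> EQ \<union> incident_edges E u"
    proof (cases "u \<in> e")
      case True then show ?thesis using e EHE unfolding incident_edges_def by auto
    next
      case False
      then have "x \<in> N" "y \<in> N" using e xy unfolding N_def by auto
      then have "x \<in> Q" "y \<in> Q" using QC S_def by auto
      then have "e \<in> EQ" using cQ xy unfolding complete_graph_def by blast
      then show ?thesis by blast
    qed
  qed
  have "EH = EQ \<union> incident_edges E u" using EHsub maxH[OF tsub] by blast
  then show ?thesis using blk uQ unfolding Qu_def by auto
qed

end
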